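(* Let $F\subsetneq K$ be fields of characteristic $0$, with $F$ a proper nonempty subfield of $K$. Let $p\in K[x]$ be a nonzero polynomial and $r$ a positive integer. Then $D_F(p^{[r]})\geq D_F(p)$.
   Context: $p^{[r]}$ denotes the $r$-th iterate of $p$. For sets $F\subset K$ and $p(x)=\sum_{k=0}^{n}a_kx^k\in K[x]$ with $a_n\neq 0$, the $F$ deficit $D_F(p)$ is defined as follows: if $p\in K[x]\setminus F[x]$, then $D_F(p)=n-\max\{0\le k\le n: a_k\notin F\}$; if $p\in F[x]$, then $D_F(p)=n$. Here $F[x]$ denotes the set of polynomials with all coefficients in $F$. *)

theory Defs
  imports "HOL-Computational_Algebra.Polynomial"
begin

definition is_subfield :: "'k::field set \<Rightarrow> bool" where
  "is_subfield F \<longleftrightarrow> 0 \<in> F \<and> 1 \<in> F \<and>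
     (\<forall>a\<in>F. \<forall>b\<in>F. a + b \<in> F \<and> a * b \<in> F) \<and>
     (\<forall>a\<in>F. - a \<in> F) \<and> (\<forall>a\<in>F. a \<noteq> 0 \<longrightarrow> inverse a \<in> F)"

definition poly_iter :: "'a::comm_semiring_1 poly \<Rightarrow> nat \<Rightarrow> 'a poly" where
  "poly_iter p r = ((\<lambda>q. pcompose p q) ^^ r) [:0, 1:]"

definition deficit :: "'k::zero set \<Rightarrow> 'k poly \<Rightarrow> nat" where
  "deficit F p =
     (if \<forall>k \<le> degree p. coeff p k \<in> F then degree p
      else degree p - Max {k. k \<le> degree p \<and> coeff p k \<notin> F})"

end

theory Submission
  imports Defs
begin

definition BF :: "'k::field set \<Rightarrow> nat \<Rightarrow> 'k poly \<Rightarrow> bool" where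
  "BF F e q \<longleftrightarrow> (\<forall>k>e. coeff q k \<in> F)"

lemma sub_sum:
  assumes "is_subfield F" "\<And>i. i \<in> A \<Longrightarrow> f i \<in> F"
  shows "sum f A \<in> F"
  using assms(2)
proof (induction A rule: infinite_finite_induct)
  case (infinite A) then show ?case using assms(1) by (simp add: is_subfield_def)
next
  case empty then show ?case using assms(1) by (simp add: is_subfield_def)
next
  case (insert x A) then show ?case using assms(1) by (simp add: is_subfield_def)
qed

lemma BF_mono: "BF F e q \<Longrightarrow> e \<le> e' \<Longrightarrow> BF F e' q"
  unfolding BF_def by auto

lemma BF_deg: "is_subfield F \<Longrightarrow> degree q \<le> e \<Longrightarrow> BF F e q"
  unfolding BF_def is_subfield_def by (auto simp: coeff_eq_0)

lemma BF_mult: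
  assumes sf: "is_subfield F" and "BF F e q" "degree q \<le> a" "BF F e' q'" "degree q' \<le> a'"
  shows "BF F (max (e + a') (a + e')) (q * q')"
  unfolding BF_def
proof (intro allI impI)
  fix k assume k: "max (e + a') (a + e') < k"
  show "coeff (q * q') k \<in> F"
    unfolding coeff_mult
  proof (rule sub_sum[OF sf])
    fix i assume "i \<in> {..k}"
    hence ik: "i \<le> k" by simp
    show "coeff q i * coeff q' (k - i) \<in> F"
    proof (cases "i \<le> e")
      case True
      hence "k - i > a'" using k ik by linarith
      hence "coeff q' (k - i) = 0" using assms(5) by (simp add: coeff_eq_0)
      thus ?thesis using sf by (simp add: is_subfield_def)
    next
      case False
      hence qi: "coeff q i \<in> F" using assms(2) by (simp add: BF_def)
      show ?thesis
      proof (cases "k - i \<le> e'")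
        case True
        hence "i > a" using k ik by linarith
        hence "coeff q i = 0" using assms(3) by (simp add: coeff_eq_0)
        thus ?thesis using sf by (simp add: is_subfield_def)
      next
        case False
        hence "coeff q' (k - i) \<in> F" using assms(4) by (simp add: BF_def)
        thus ?thesis using qi sf by (simp add: is_subfield_def)
      qed
    qed
  qed
qed

lemma BF_power:
  assumes sf: "is_subfield F" and "BF F e q" "degree q \<le> N" "e \<le> N"
  shows "k \<ge> 1 \<Longrightarrow> BF F ((k - 1) * N + e) (q ^ k)"
proof (induction k rule: dec_induct)
  case base then show ?case using assms by simp
next
  case (step k)
  have d: "degree (q ^ k) \<le> k * N"
    by (metis assms(3) degree_power_le mult.commute mult_le_mono2 order_trans)
  have "BF F (max (e + k * N) (N + ((k - 1) * N + e))) (q * q ^ k)"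
    by (rule BF_mult[OF sf assms(2) assms(3) step.IH d])
  moreover have "max (e + k * N) (N + ((k - 1) * N + e)) = (Suc k - 1) * N + e"
    using step.hyps by (cases k) auto
  ultimately show ?case by simp
qed

lemma pcompose_monom: "pcompose (monom c i) q = smult c (q ^ i)"
  by (induction i) (simp_all add: monom_Suc pcompose_pCons monom_0)

lemma BF_sum:
  assumes "is_subfield F" "\<And>i. i \<in> A \<Longrightarrow> BF F e (f i)"
  shows "BF F e (sum f A)"
  unfolding BF_def coeff_sum
  using assms by (auto intro!: sub_sum simp: BF_def)

lemma BF_compose:
  assumes sf: "is_subfield F"
    and p: "BF F m p" and q: "BF F e q" "degree q \<le> N" "e \<le> N"
  shows "BF F (max (m * N) ((degree p - 1) * N + e)) (pcompose p q)"
proof -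
  have "pcompose p q = (\<Sum>i\<le>degree p. smult (coeff p i) (q ^ i))"
    by (subst (1) poly_as_sum_of_monoms[symmetric, of p])
       (simp add: pcompose_sum pcompose_monom)
  moreover have "BF F (max (m * N) ((degree p - 1) * N + e)) (smult (coeff p i) (q ^ i))"
    if i: "i \<in> {..degree p}" for i
  proof (cases "coeff p i \<in> F")
    case True
    show ?thesis
    proof (cases "i = 0")
      case True
      then show ?thesis using \<open>coeff p i \<in> F\<close> sf
        by (auto simp: BF_def is_subfield_def coeff_eq_0)
    next
      case False
      have "BF F ((i - 1) * N + e) (q ^ i)" using BF_power[OF sf q, of i] False by simp
      hence "BF F ((i - 1) * N + e) (smult (coeff p i) (q ^ i))"
        using True sf by (auto simp: BF_def is_subfield_def)
      moreover have "(i - 1) * N + e \<le> (degree p - 1) * N + e" using i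
        by (simp add: mult_le_mono1 diff_le_mono)
      ultimately show ?thesis using BF_mono by (metis max.coboundedI2 order_trans)
    qed
  next
    case False
    hence "i \<le> m" using p by (auto simp: BF_def not_less[symmetric])
    have "degree (smult (coeff p i) (q ^ i)) \<le> i * N"
      by (metis degree_power_le degree_smult_le le_trans mult.commute mult_le_mono2 q(2))
    also have "\<dots> \<le> m * N" using \<open>i \<le> m\<close> by (simp add: mult_le_mono1)
    finally show ?thesis by (intro BF_deg[OF sf]) simp
  qed
  ultimately show ?thesis using BF_sum[OF sf, of "{..degree p}"] by simp
qed

lemma deficit_BF: "is_subfield F \<Longrightarrow> BF F (degree p - deficit F p) p"
proof (cases "\<forall>k \<le> degree p. coeff p k \<in> F")
  case True
  assume sf: "is_subfield F"
  have "coeff p k \<in> F" for k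
  proof (cases "k \<le> degree p")
    case True then show ?thesis using \<open>\<forall>k \<le> degree p. coeff p k \<in> F\<close> by blast
  next
    case False
    hence "coeff p k = 0" by (simp add: coeff_eq_0)
    then show ?thesis using sf by (simp add: is_subfield_def)
  qed
  then show ?thesis unfolding BF_def by blast
next
  case False
  assume sf: "is_subfield F"
  define S where "S = {k. k \<le> degree p \<and> coeff p k \<notin> F}"
  have fin: "finite S" unfolding S_def by simp
  have ne: "S \<noteq> {}" using False unfolding S_def by auto
  have M: "Max S \<le> degree p" using fin ne unfolding S_def by auto
  have d: "deficit F p = degree p - Max S" using False unfolding deficit_def S_def by auto
  show ?thesis unfolding BF_def d
  proof (intro allI impI)
    fix k assume "degree p - (degree p - Max S) < k"
    hence k: "Max S < k" using M by simp
    show "coeff p k \<in> F"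
    proof (rule ccontr)
      assume "coeff p k \<notin> F"
      hence "k \<le> degree p" using sf by (metis coeff_eq_0 is_subfield_def not_le)
      hence "k \<in> S" using \<open>coeff p k \<notin> F\<close> unfolding S_def by simp
      thus False using k fin by (meson Max_ge not_le)
    qed
  qed
qed

lemma BF_deficit:
  assumes "BF F (degree q - d) q" "d \<le> degree q"
  shows "d \<le> deficit F q"
proof (cases "\<forall>k \<le> degree q. coeff q k \<in> F")
  case True
  then show ?thesis using assms unfolding deficit_def by simp
next
  case False
  define S where "S = {k. k \<le> degree q \<and> coeff q k \<notin> F}"
  have fin: "finite S" unfolding S_def by simp
  have ne: "S \<noteq> {}" using False unfolding S_def by auto
  have "Max S \<in> S" using fin ne by simp
  hence "Max S \<le> degree q - d" using assms(1) unfolding S_def BF_def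
    using not_le by auto
  moreover have d: "deficit F q = degree q - Max S" using False unfolding deficit_def S_def by auto
  ultimately show ?thesis using assms(2) by simp
qed

lemma poly_iter_Suc: "poly_iter p (Suc r) = pcompose p (poly_iter p r)"
  by (simp add: poly_iter_def)

theorem theorem21:
  fixes F :: "'k::field_char_0 set" and p :: "'k poly" and r :: nat
  assumes "is_subfield F" and "F \<noteq> UNIV"
    and "p \<noteq> 0" and "r \<ge> 1"
  shows "deficit F (poly_iter p r) \<ge> deficit F p"
proof (cases "degree p = 0")
  case True
  then show ?thesis by (simp add: deficit_def)
next
  case False
  define n where "n = degree p"
  define d where "d = deficit F p"
  have dn: "d \<le> n" unfolding d_def n_def deficit_def by auto
  have np: "n \<ge> 1" using False n_def by simp
  have degit: "degree (poly_iter p r) = n ^ r" for r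
    by (induction r) (simp_all add: poly_iter_def degree_pcompose n_def)
  have main: "BF F (n ^ r - d) (poly_iter p r)" if "r \<ge> 1" for r
    using that
  proof (induction r rule: dec_induct)
    case base
    then show ?case using deficit_BF[OF assms(1), of p] by (simp add: poly_iter_def n_def d_def)
  next
    case (step r)
    define N where "N = n ^ r"
    have Nn: "n \<le> N" unfolding N_def using step.hyps np
      by (metis power_increasing power_one_right)
    have "BF F (max ((n - d) * N) ((n - 1) * N + (N - d))) (pcompose p (poly_iter p r))"
      using BF_compose[OF assms(1) deficit_BF[OF assms(1), of p] step.IH] degit[of r] Nn dn
      unfolding N_def n_def d_def by simp
    moreover have "max ((n - d) * N) ((n - 1) * N + (N - d)) \<le> n ^ Suc r - d"
    proof -
      have e1: "n ^ Suc r = n * N" by (simp add: N_def)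
      have "(n - d) * N \<le> n * N - d"
      proof -
        have "(n - d) * N + d \<le> (n - d) * N + d * N" using Nn np by simp
        also have "\<dots> = n * N" using dn by (simp add: add_mult_distrib[symmetric])
        finally show ?thesis by linarith
      qed
      moreover have "(n - 1) * N + (N - d) = n * N - d"
      proof -
        have "(n - 1) * N + N = n * N" using np
          by (metis Suc_diff_1 add.commute less_le_trans mult_Suc zero_less_one)
        thus ?thesis using dn Nn by linarith
      qed
      ultimately show ?thesis using e1 by linarith
    qed
    ultimately show ?case by (simp add: poly_iter_Suc BF_mono)
  qed
  have "n \<le> n ^ r" using assms(4) np
    by (metis power_increasing power_one_right)
  hence "d \<le> degree (poly_iter p r)" using degit[of r] dn by simp
  moreover have "BF F (degree (poly_iter p r) - d) (poly_iter p r)"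
    using main[OF assms(4)] degit[of r] by simp
  ultimately show ?thesis using BF_deficit d_def by blast
qed

end
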